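(* Let $q$ be an odd prime power and $d\ge 2$. Let $V$ be a $(2d+1)$-dimensional vector space over $\mathbb{F}_q$ with basis $z,e_0,f_0,x,y,e_1,f_1,\dots,e_{d-2},f_{d-2}$ and nondegenerate symmetric bilinear form $\beta$ with $V=\langle z\rangle\perp\langle e_0,f_0\rangle\perp\langle x,y\rangle\perp\langle e_1,f_1\rangle\perp\cdots\perp\langle e_{d-2},f_{d-2}\rangle$, $\beta(z,z)=1$, $\beta(e_i,f_i)=1$, $\beta(e_i,e_i)=\beta(f_i,f_i)=0$, and $\langle x,y\rangle$ anisotropic; let $\kappa(v)=\beta(v,v)/2$ and let $\mathcal{Q}(2d,q)$ be the associated parabolic quadric. Let $W=\langle z,e_0,f_0\rangle$, $U=W^\perp$, $B=\{g\oplus 1_U: g\in\Omega(W)\}$ with $\Omega(W)$ the derived subgroup of the orthogonal group of $(W,\kappa|_W)$, and let $\tau$ be the linear map with $z\mapsto -z$ fixing all other basis vectors. Then for every point $P$ of $\mathcal{Q}(2d,q)$ there exists $g\in B$ with $P^g=P^\tau$.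
   Context: A point of $\mathcal{Q}(2d,q)$ is a $1$-dimensional subspace of $V$ on which $\kappa$ vanishes. *)

theory Defs
  imports Main
begin

text \<open>Coordinates w.r.t. the ordered basis
  z (index 0), e0 (1), f0 (2), x (3), y (4), and e_i (3+2i), f_i (4+2i) for i = 1..d-2.
  Vectors of V are functions nat => 'a vanishing at indices >= 2d+1.
  The Gram matrix of the anisotropic plane <x,y> is [[a,b],[b,c]].\<close>

definition Vsp :: "nat \<Rightarrow> (nat \<Rightarrow> 'a::field) set" where
  "Vsp d = {v. \<forall>k\<ge>2*d+1. v k = 0}"

definition beta :: "'a::field \<Rightarrow> 'a \<Rightarrow> 'a \<Rightarrow> nat \<Rightarrow> (nat \<Rightarrow> 'a) \<Rightarrow> (nat \<Rightarrow> 'a) \<Rightarrow> 'a" where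
  "beta a b c d u v =
     u 0 * v 0 + (u 1 * v 2 + u 2 * v 1)
     + (a * u 3 * v 3 + b * (u 3 * v 4 + u 4 * v 3) + c * u 4 * v 4)
     + (\<Sum>i\<in>{1..d-2}. u (3+2*i) * v (4+2*i) + u (4+2*i) * v (3+2*i))"

definition kappa :: "'a::field \<Rightarrow> 'a \<Rightarrow> 'a \<Rightarrow> nat \<Rightarrow> (nat \<Rightarrow> 'a) \<Rightarrow> 'a" where
  "kappa a b c d v = beta a b c d v v / 2"

definition anisotropic_plane :: "'a::field \<Rightarrow> 'a \<Rightarrow> 'a \<Rightarrow> bool" where
  "anisotropic_plane a b c \<longleftrightarrow>
     (\<forall>s t. a * s * s + 2 * b * s * t + c * t * t = 0 \<longrightarrow> s = 0 \<and> t = 0)"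

definition Wsp :: "(nat \<Rightarrow> 'a::field) set" where
  "Wsp = {v. \<forall>k\<ge>3. v k = 0}"

definition projW :: "(nat \<Rightarrow> 'a::field) \<Rightarrow> (nat \<Rightarrow> 'a)" where
  "projW v = (\<lambda>k. if k < 3 then v k else 0)"

definition projU :: "(nat \<Rightarrow> 'a::field) \<Rightarrow> (nat \<Rightarrow> 'a)" where
  "projU v = (\<lambda>k. if k < 3 then 0 else v k)"

definition line :: "(nat \<Rightarrow> 'a::field) \<Rightarrow> (nat \<Rightarrow> 'a) set" where
  "line v = {(\<lambda>k. s * v k) | s. True}"

text \<open>To make composition/inverses well defined on the whole ambient
  function space, elements are extended by the identity outside W (this extension
  is just a representation choice, it does not affect the group).\<close>
definition orthW :: "'a::field \<Rightarrow> 'a \<Rightarrow> 'a \<Rightarrow> nat \<Rightarrow> ((nat \<Rightarrow> 'a) \<Rightarrow> (nat \<Rightarrow> 'a)) set" where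
  "orthW a b c d = {g. bij_betw g Wsp Wsp
      \<and> (\<forall>u\<in>Wsp. \<forall>w\<in>Wsp. \<forall>s t. g (\<lambda>k. s * u k + t * w k) = (\<lambda>k. s * g u k + t * g w k))
      \<and> (\<forall>u\<in>Wsp. kappa a b c d (g u) = kappa a b c d u)
      \<and> (\<forall>v. v \<notin> Wsp \<longrightarrow> g v = v)}"

inductive_set OmegaW :: "'a::field \<Rightarrow> 'a \<Rightarrow> 'a \<Rightarrow> nat \<Rightarrow> ((nat \<Rightarrow> 'a) \<Rightarrow> (nat \<Rightarrow> 'a)) set"
  for a b c d where
  one: "id \<in> OmegaW a b c d"
| comm: "g \<in> orthW a b c d \<Longrightarrow> h \<in> orthW a b c d \<Longrightarrow> inv g \<circ> inv h \<circ> g \<circ> h \<in> OmegaW a b c d"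
| mult: "g \<in> OmegaW a b c d \<Longrightarrow> h \<in> OmegaW a b c d \<Longrightarrow> g \<circ> h \<in> OmegaW a b c d"
| inverse: "g \<in> OmegaW a b c d \<Longrightarrow> inv g \<in> OmegaW a b c d"

definition oplusU :: "((nat \<Rightarrow> 'a::field) \<Rightarrow> (nat \<Rightarrow> 'a)) \<Rightarrow> (nat \<Rightarrow> 'a) \<Rightarrow> (nat \<Rightarrow> 'a)" where
  "oplusU g v = (\<lambda>k. g (projW v) k + projU v k)"

definition Bgrp :: "'a::field \<Rightarrow> 'a \<Rightarrow> 'a \<Rightarrow> nat \<Rightarrow> ((nat \<Rightarrow> 'a) \<Rightarrow> (nat \<Rightarrow> 'a)) set" where
  "Bgrp a b c d = oplusU ` OmegaW a b c d"

definition tau :: "(nat \<Rightarrow> 'a::field) \<Rightarrow> (nat \<Rightarrow> 'a)" where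
  "tau v = v(0 := - v 0)"

end

theory Submission
  imports Defs
begin

lemma even_card_inv:
  fixes f :: "'b \<Rightarrow> 'b"
  assumes inv: "\<And>x. f (f x) = x" and nf: "\<And>x. f x \<noteq> x"
  shows "finite S \<Longrightarrow> f ` S \<subseteq> S \<Longrightarrow> even (card S)"
proof (induction "card S" arbitrary: S rule: less_induct)
  case less
  show ?case
  proof (cases "S = {}")
    case True then show ?thesis by simp
  next
    case False
    then obtain x where x: "x \<in> S" by blast
    have fx: "f x \<in> S" using x less.prems by blast
    define S' where "S' = S - {x, f x}"
    have cl: "f ` S' \<subseteq> S'"
    proof
      fix y assume "y \<in> f ` S'"
      then obtain t where t: "t \<in> S'" "y = f t" by blast
      have "f t \<in> S" using t less.prems unfolding S'_def by blast
      moreover have "f t \<noteq> x" using t inv unfolding S'_def by (metis DiffD2 insertCI)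
      moreover have "f t \<noteq> f x" using t inv unfolding S'_def by (metis DiffD2 insertCI)
      ultimately show "y \<in> S'" using t unfolding S'_def by auto
    qed
    have cS: "card S = card S' + 2"
    proof -
      have "card S' = card S - card {x, f x}" unfolding S'_def
        using x fx less.prems by (subst card_Diff_subset) auto
      moreover have "card {x, f x} = 2" using nf[of x] by auto
      moreover have "card {x, f x} \<le> card S" using x fx less.prems
        by (intro card_mono) auto
      ultimately show ?thesis by linarith
    qed
    have "even (card S')"
      using less.hyps[of S'] cl less.prems cS unfolding S'_def by auto
    then show ?thesis using cS by simp
  qed
qed

lemma two_nz:
  assumes "odd (card (UNIV :: 'a::{field,finite} set))"
  shows "(2::'a) \<noteq> 0"
proof
  assume h: "(2::'a) = 0"
  have "even (card (UNIV :: 'a set))"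
  proof (rule even_card_inv[of "\<lambda>x. x + 1"])
    fix x :: 'a show "x + 1 + 1 = x" using h
      by (metis add.assoc add.right_neutral one_add_one)
  qed auto
  then show False using assms by simp
qed

definition bW :: "(nat \<Rightarrow> 'a::field) \<Rightarrow> (nat \<Rightarrow> 'a) \<Rightarrow> 'a" where
  "bW u v = u 0 * v 0 + u 1 * v 2 + u 2 * v 1"

definition R :: "(nat \<Rightarrow> 'a::field) \<Rightarrow> (nat \<Rightarrow> 'a) \<Rightarrow> (nat \<Rightarrow> 'a)" where
  "R p x = (if x \<in> Wsp then (\<lambda>k. x k - (2 * bW x p / bW p p) * p k) else x)"

definition vec3 :: "'a::field \<Rightarrow> 'a \<Rightarrow> 'a \<Rightarrow> nat \<Rightarrow> 'a" where
  "vec3 x0 x1 x2 = (\<lambda>k. if k = 0 then x0 else if k = 1 then x1 else if k = 2 then x2 else 0)"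

lemma vec3_W: "vec3 x0 x1 x2 \<in> Wsp"
  unfolding vec3_def Wsp_def by auto

lemma beta_W:
  assumes "u \<in> Wsp"
  shows "beta a b c d u u = bW u u"
proof -
  have h: "\<And>k. k \<ge> 3 \<Longrightarrow> u k = 0" using assms unfolding Wsp_def by auto
  have "\<And>i. u (3+2*i) = 0" "\<And>i. u (4+2*i) = 0" using h by auto
  moreover have "u 3 = 0" "u 4 = 0" using h by auto
  ultimately show ?thesis unfolding beta_def bW_def by simp
qed

lemma bW_sym: "bW u v = bW v u"
  unfolding bW_def by (simp add: algebra_simps)

lemma bW_lin: "bW (\<lambda>k. s * u k + t * w k) p = s * bW u p + t * bW w p"
  unfolding bW_def by (simp add: algebra_simps)

lemma bW_sub: "bW (\<lambda>k. x k - m * p k) p = bW x p - m * bW p p"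
  unfolding bW_def by (simp add: algebra_simps)

lemma bW_sub2: "bW (\<lambda>k. x k - m * p k) (\<lambda>k. x k - m * p k)
   = bW x x - 2 * m * bW x p + m * m * bW p p"
  unfolding bW_def by (simp add: algebra_simps)

lemma R_W: "p \<in> Wsp \<Longrightarrow> x \<in> Wsp \<Longrightarrow> R p x \<in> Wsp"
  unfolding R_def Wsp_def by auto

lemma R_R:
  assumes p: "p \<in> Wsp" and nz: "bW p p \<noteq> 0"
  shows "R p (R p x) = x"
proof (cases "x \<in> Wsp")
  case True
  define m where "m = 2 * bW x p / bW p p"
  have r: "R p x = (\<lambda>k. x k - m * p k)" using True unfolding R_def m_def by simp
  have w: "R p x \<in> Wsp" using R_W[OF p True] .
  have "bW (R p x) p = - bW x p" unfolding r bW_sub m_def using nz by simp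
  then have "2 * bW (R p x) p / bW p p = - m" unfolding m_def by simp
  then show ?thesis using w unfolding R_def[of p "R p x"] by (simp add: r)
next
  case False then show ?thesis unfolding R_def by simp
qed

lemma R_comp: "p \<in> Wsp \<Longrightarrow> bW p p \<noteq> 0 \<Longrightarrow> R p \<circ> R p = id"
  using R_R by fastforce

lemma R_inv: "p \<in> Wsp \<Longrightarrow> bW p p \<noteq> 0 \<Longrightarrow> inv (R p) = R p"
  using R_comp by (metis inv_unique_comp)

lemma R_orth:
  assumes p: "p \<in> Wsp" and nz: "bW p p \<noteq> 0"
  shows "R p \<in> orthW a b c d"
  unfolding orthW_def
proof (intro CollectI conjI ballI allI impI)
  show "bij_betw (R p) Wsp Wsp"
    by (rule bij_betw_byWitness[where f'="R p"]) (use R_R[OF p nz] R_W[OF p] in auto)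
next
  fix u w :: "nat \<Rightarrow> 'a" and s t :: 'a
  assume u: "u \<in> Wsp" and w: "w \<in> Wsp"
  have "(\<lambda>k. s * u k + t * w k) \<in> Wsp" using u w unfolding Wsp_def by auto
  then show "R p (\<lambda>k. s * u k + t * w k) = (\<lambda>k. s * R p u k + t * R p w k)"
    using u w unfolding R_def bW_lin by (auto simp: algebra_simps add_divide_distrib)
next
  fix u :: "nat \<Rightarrow> 'a" assume u: "u \<in> Wsp"
  define m where "m = 2 * bW u p / bW p p"
  have r: "R p u = (\<lambda>k. u k - m * p k)" using u unfolding R_def m_def by simp
  have "bW (R p u) (R p u) = bW u u" unfolding r bW_sub2 m_def using nz
    by (simp add: field_simps)
  then show "kappa a b c d (R p u) = kappa a b c d u"
    unfolding kappa_def using beta_W[OF u] beta_W[OF R_W[OF p u]] by simp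
next
  fix v :: "nat \<Rightarrow> 'a" assume "v \<notin> Wsp"
  then show "R p v = v" unfolding R_def by simp
qed


lemma Rz_tau:
  assumes w: "w \<in> Wsp"
  shows "R (vec3 1 0 0) w = tau w"
proof -
  have b1: "bW (vec3 1 0 0) (vec3 (1::'a) 0 0) = 1" unfolding bW_def vec3_def by simp
  have b2: "bW w (vec3 1 0 0) = w 0" unfolding bW_def vec3_def by simp
  show ?thesis using w unfolding R_def b1 b2 tau_def
    by (auto simp: vec3_def fun_eq_iff)
qed

lemma key:
  fixes v p :: "nat \<Rightarrow> 'a::field"
  assumes two: "(2::'a) \<noteq> 0" and p: "p \<in> Wsp" and nz: "bW p p \<noteq> 0"
    and cond: "tau (projW v) 0 = 2 * bW (tau (projW v)) p / bW p p * p 0"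
  shows "\<exists>g\<in>Bgrp a b c d. g ` line v = tau ` line v"
proof -
  define z where "z = vec3 (1::'a) 0 0"
  have zW: "z \<in> Wsp" unfolding z_def by (rule vec3_W)
  have znz: "bW z z \<noteq> 0" unfolding z_def bW_def vec3_def by simp
  define C where "C = R p \<circ> R z \<circ> R p \<circ> R z"
  have "inv (R p) \<circ> inv (R z) \<circ> R p \<circ> R z \<in> OmegaW a b c d"
    by (rule OmegaW.comm) (simp_all add: R_orth p nz zW znz)
  then have CO: "C \<in> OmegaW a b c d" unfolding C_def using R_inv[OF p nz] R_inv[OF zW znz] by simp
  define u where "u = tau (projW v)"
  have uW: "u \<in> Wsp" unfolding u_def tau_def projW_def Wsp_def by auto
  have eq: "oplusU C y = tau y" if y: "y \<in> line v" for y
  proof -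
    obtain s where ys: "y = (\<lambda>k. s * v k)" using y unfolding line_def by auto
    define w where "w = projW y"
    have wW: "w \<in> Wsp" unfolding w_def projW_def Wsp_def by auto
    have tw: "tau w = (\<lambda>k. s * u k)" unfolding w_def u_def ys tau_def projW_def
      by (auto simp: fun_eq_iff)
    have suW: "(\<lambda>k. s * u k) \<in> Wsp" using uW unfolding Wsp_def by auto
    define u' where "u' = R p (\<lambda>k. s * u k)"
    have u'W: "u' \<in> Wsp" unfolding u'_def by (rule R_W[OF p suW])
    have "bW (\<lambda>k. s * u k) p = s * bW u p" unfolding bW_def by (simp add: algebra_simps)
    then have "u' 0 = s * (u 0 - 2 * bW u p / bW p p * p 0)"
      unfolding u'_def R_def using suW by (simp add: algebra_simps)
    also have "\<dots> = 0" using cond unfolding u_def by simp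
    finally have u'0: "u' 0 = 0" .
    have "R z u' = u'" unfolding z_def using Rz_tau[OF u'W] u'0 unfolding tau_def
      by (simp add: fun_upd_idem)
    then have Cw: "C w = tau w"
      unfolding C_def using Rz_tau[OF wW] tw R_R[OF p nz] unfolding z_def u'_def
      by simp
    show ?thesis unfolding oplusU_def Cw[unfolded w_def]
      by (auto simp: fun_eq_iff tau_def projW_def projU_def)
  qed
  have "oplusU C ` line v = tau ` line v" using eq by (rule image_cong[OF refl])
  moreover have "oplusU C \<in> Bgrp a b c d" unfolding Bgrp_def using CO by blast
  ultimately show ?thesis by blast
qed


lemma exists_g:
  fixes v :: "nat \<Rightarrow> 'a::field"
  assumes two: "(2::'a) \<noteq> 0"
  shows "\<exists>g\<in>Bgrp a b c d. g ` line v = tau ` line v"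
proof -
  have t0: "tau (projW v) 0 = - v 0" unfolding tau_def projW_def by simp
  have bu: "bW (tau (projW v)) q = - v 0 * q 0 + v 1 * q 2 + v 2 * q 1" for q
    unfolding bW_def tau_def projW_def by simp
  have v3: "vec3 x0 x1 x2 0 = x0" "vec3 x0 x1 x2 1 = x1" "vec3 x0 x1 x2 2 = x2"
    for x0 x1 x2 :: 'a unfolding vec3_def by auto
  have bv: "bW (vec3 x0 x1 x2) (vec3 x0 x1 x2) = x0 * x0 + 2 * x1 * x2" for x0 x1 x2 :: 'a
    unfolding bW_def vec3_def by (simp add: algebra_simps mult_2)
  have four: "(4::'a) \<noteq> 0"
  proof
    assume "(4::'a) = 0"
    moreover have "(2::'a) * 2 = 4" by simp
    ultimately have "(2::'a) * 2 = 0" by simp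
    then show False using two by (metis mult_eq_0_iff)
  qed
  show ?thesis
  proof (cases "v 0 = 0")
    case True
    show ?thesis by (rule key[OF two vec3_W, of 0 1 1]) (use True two in \<open>simp_all add: t0 bu v3 bv vec3_def bW_def tau_def projW_def\<close>)
  next
    case F0: False
    show ?thesis
    proof (cases "v 1 = 0")
      case F1: False
      show ?thesis by (rule key[OF two vec3_W, of 1 0 "v 0 / (2 * v 1)"])
        (use F1 two in \<open>simp_all add: t0 bu v3 bv vec3_def bW_def tau_def projW_def field_simps\<close>)
    next
      case T1: True
      show ?thesis
      proof (cases "v 2 = 0")
        case F2: False
        show ?thesis by (rule key[OF two vec3_W, of 1 "v 0 / (2 * v 2)" 0])
          (use F2 T1 two in \<open>simp_all add: t0 bu v3 bv vec3_def bW_def tau_def projW_def field_simps\<close>)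
      next
        case T2: True
        show ?thesis by (rule key[OF two vec3_W, of 1 1 "1/2"])
          (use T2 T1 two four in \<open>simp_all add: t0 bu v3 bv vec3_def bW_def tau_def projW_def field_simps\<close>)
      qed
    qed
  qed
qed

theorem lemma3p5:
  fixes a b c :: "'a::{field,finite}" and d :: nat
  assumes "odd (card (UNIV :: 'a set))"
    and "d \<ge> 2"
    and "anisotropic_plane a b c"
  shows "\<forall>v\<in>Vsp d. v \<noteq> (\<lambda>_. 0) \<and> kappa a b c d v = 0 \<longrightarrow>
           (\<exists>g\<in>Bgrp a b c d. g ` line v = tau ` line v)"
  using exists_g[OF two_nz[OF assms(1)]] by blast

end
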